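(* Let $\bm\mu=(\mu_1,\dots,\mu_r)$ be finite positive Borel measures on the unit circle with infinite supports, fix the square-root branch as in the context, let $\bm n\in\mathbb N^r$ be $\phi$-normal for $\bm\mu$, $\tau\in\partial\mathbb D$, and let $X\not\equiv0$ be a $\tau$-invariant paraorthogonal function for $\bm n$. If the polynomial $z^{(|\bm n|+1)/2}X(z)$ vanishes at two distinct points $e^{i\varphi_1}\neq e^{i\varphi_2}$ of $\partial\mathbb D$ ($\varphi_1,\varphi_2\in\mathbb R$), then $\bm n$ is not $\phi$-normal with respect to the system of real signed measures $\widehat{\bm\mu}$ given by $d\widehat\mu_j(e^{i\theta})=4\sin\frac{\theta-\varphi_1}{2}\sin\frac{\theta-\varphi_2}{2}\,d\mu_j(e^{i\theta})$, $\theta\in[t_0,t_0+2\pi)$, $j=1,\dots,r$.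
   Context: $\partial\mathbb D=\{|z|=1\}$. Fix $t_0\in\mathbb R$ and let $z^{k/2}=|z|^{k/2}\exp(ik\arg_{[t_0,t_0+2\pi)}(z)/2)$, $k\in\mathbb Z$. $|\bm n|=\sum_j n_j$; $\operatorname{span}\{z^p\}_{p=a}^b$ ($b-a\in\mathbb Z$) is the span of $z^a,\dots,z^b$. For a system $\bm\nu$ of (possibly signed) measures on $\partial\mathbb D$, $\bm n$ is $\phi$-normal w.r.t. $\bm\nu$ if there is a unique $\phi\in\operatorname{span}\{z^p\}_{p=-|\bm n|/2}^{|\bm n|/2}$ with coefficient of $z^{|\bm n|/2}$ equal to $1$ such that $\int\phi(z)z^{-p}\,d\nu_j(z)=0$ for $p=-n_j/2,\dots,n_j/2-1$, $j=1,\dots,r$. A $\tau$-invariant paraorthogonal function for $\bm n$ is any $X\in\operatorname{span}\{z^p\}_{p=-(|\bm n|+1)/2}^{(|\bm n|+1)/2}$ with $X(z)=\tau\overline{X(1/\bar z)}$ and $\int X(z)z^{-p}\,d\mu_j(z)=0$ for $p=-(n_j-1)/2,\dots,(n_j-1)/2$, $j=1,\dots,r$. *)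

theory Defs
  imports "HOL-Analysis.Analysis"
begin

text \<open>Argument of z taken in the window [t0, t0 + 2 pi).\<close>
definition argt :: "real \<Rightarrow> complex \<Rightarrow> real" where
  "argt t0 z = Arg z + 2 * pi * of_int \<lceil>(t0 - Arg z) / (2 * pi)\<rceil>"

text \<open>The branch z^(k/2) = |z|^(k/2) exp(i k arg(z) / 2), arg in [t0, t0+2 pi).\<close>
definition zhalf :: "real \<Rightarrow> int \<Rightarrow> complex \<Rightarrow> complex" where
  "zhalf t0 k z = complex_of_real (cmod z powr (real_of_int k / 2))
                  * exp (\<i> * complex_of_real (real_of_int k * argt t0 z / 2))"

text \<open>Element of span of z^p, p = -m/2, ..., m/2, with coefficient c k at z^((2k-m)/2).\<close>
definition hspan :: "real \<Rightarrow> nat \<Rightarrow> (nat \<Rightarrow> complex) \<Rightarrow> complex \<Rightarrow> complex" where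
  "hspan t0 m c z = (\<Sum>k\<le>m. c k * zhalf t0 (2 * int k - int m) z)"

definition msupp :: "complex measure \<Rightarrow> complex set" where
  "msupp M = {z. \<forall>e>0. emeasure M (ball z e) \<noteq> 0}"

text \<open>phi-normality w.r.t. the system of (real signed) measures w_j d mu_j, j < r.\<close>
definition phi_normal_w :: "real \<Rightarrow> nat \<Rightarrow> (nat \<Rightarrow> complex measure) \<Rightarrow> (nat \<Rightarrow> complex \<Rightarrow> real)
    \<Rightarrow> (nat \<Rightarrow> nat) \<Rightarrow> bool" where
  "phi_normal_w t0 r \<mu> w n \<longleftrightarrow>
     (let N = (\<Sum>j<r. n j) in
      \<exists>!c::nat \<Rightarrow> complex. (\<forall>k>N. c k = 0) \<and> c N = 1 \<and>
        (\<forall>j<r. \<forall>k<n j.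
           (LINT z|\<mu> j. complex_of_real (w j z) * hspan t0 N c z
                          * zhalf t0 (int (n j) - 2 * int k) z) = 0))"

definition phi_normal :: "real \<Rightarrow> nat \<Rightarrow> (nat \<Rightarrow> complex measure) \<Rightarrow> (nat \<Rightarrow> nat) \<Rightarrow> bool" where
  "phi_normal t0 r \<mu> n \<longleftrightarrow> phi_normal_w t0 r \<mu> (\<lambda>j z. 1) n"

definition para_orth :: "real \<Rightarrow> nat \<Rightarrow> (nat \<Rightarrow> complex measure) \<Rightarrow> (nat \<Rightarrow> nat) \<Rightarrow> complex
    \<Rightarrow> (complex \<Rightarrow> complex) \<Rightarrow> bool" where
  "para_orth t0 r \<mu> n \<tau> X \<longleftrightarrow>
     (let N = (\<Sum>j<r. n j) in
      (\<exists>d. X = hspan t0 (N + 1) d) \<and>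
      (\<forall>z. z \<noteq> 0 \<longrightarrow> X z = \<tau> * cnj (X (1 / cnj z))) \<and>
      (\<forall>j<r. \<forall>k<n j.
           (LINT z|\<mu> j. X z * zhalf t0 (int (n j) - 1 - 2 * int k) z) = 0))"

end

theory Submission imports Defs "HOL-Complex_Analysis.Cauchy_Integral_Theorem" "HOL-Computational_Algebra.Polynomial" begin
lemma Arg_meas[measurable]: "Arg \<in> borel_measurable borel"
  unfolding Arg_def[abs_def] by measurable
lemma argt_meas[measurable]: "argt t0 \<in> borel_measurable borel"
  unfolding argt_def[abs_def] by measurable
lemma zhalf_meas[measurable]: "zhalf t0 k \<in> borel_measurable borel"
  unfolding zhalf_def[abs_def] by measurable
lemma hspan_meas[measurable]: "hspan t0 m c \<in> borel_measurable borel"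
  unfolding hspan_def[abs_def] by measurable

lemma zhalf_circ: "cmod z = 1 \<Longrightarrow> zhalf t0 k z = cis (real_of_int k * argt t0 z / 2)"
  unfolding zhalf_def by (simp add: cis_conv_exp)

lemma cis_2pi_int: "cis (a + 2 * pi * of_int m) = cis a"
  by (simp add: complex_eq_iff cos_add sin_add)

lemma circ_cis: "cmod z = 1 \<Longrightarrow> z = cis (argt t0 z)"
proof -
  assume h: "cmod z = 1"
  have "cis (argt t0 z) = cis (Arg z)" unfolding argt_def by (rule cis_2pi_int)
  also have "\<dots> = sgn z" using h by (metis cis_Arg norm_zero zero_neq_one)
  also have "\<dots> = z" using h by (simp add: sgn_div_norm)
  finally show ?thesis by simp
qed

lemma cis_diff_sin: "cis t - cis p = cis ((t + p)/2) * (2 * \<i> * complex_of_real (sin ((t - p)/2)))"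
proof -
  have "complex_of_real (sin ((t - p)/2)) = sin (complex_of_real ((t-p)/2))" by (rule sin_of_real[symmetric])
  also have "\<dots> = (exp(\<i> * ((t-p)/2)) - exp(-(\<i> * ((t-p)/2)))) / (2*\<i>)" by (rule sin_exp_eq)
  finally have s: "complex_of_real (sin ((t - p)/2)) = (exp(\<i> * ((t-p)/2)) - exp(-(\<i> * ((t-p)/2)))) / (2*\<i>)" .
  have "cis ((t + p)/2) * (2 * \<i> * complex_of_real (sin ((t - p)/2)))
     = exp (\<i> * ((t+p)/2)) * (exp(\<i> * ((t-p)/2)) - exp(-(\<i> * ((t-p)/2))))"
    by (simp add: s cis_conv_exp)
  also have "\<dots> = exp (\<i> * ((t+p)/2) + \<i> * ((t-p)/2)) - exp (\<i> * ((t+p)/2) + -(\<i> * ((t-p)/2)))"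
    by (simp only: right_diff_distrib exp_add[symmetric])
  also have "\<i> * ((t+p)/2) + \<i> * ((t-p)/2) = \<i> * t" by (simp add: field_simps)
  also have "\<i> * ((t+p)/2) + -(\<i> * ((t-p)/2)) = \<i> * p" by (simp add: field_simps)
  finally show ?thesis by (simp add: cis_conv_exp)
qed

lemma cis_prod: "(cis t - cis p1) * (cis t - cis p2) =
   - (cis t * cis ((p1+p2)/2) * complex_of_real (4 * sin ((t - p1)/2) * sin ((t - p2)/2)))"
proof -
  have e: "(t + p1)/2 + (t + p2)/2 = t + (p1+p2)/2" by (simp add: field_simps)
  have "cis ((t + p1)/2) * cis ((t + p2)/2) = cis t * cis ((p1+p2)/2)"
    by (simp only: cis_mult e)
  then show ?thesis unfolding cis_diff_sin
    by (simp add: algebra_simps)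
qed

lemma poly_sum_le: "degree (p::'a::comm_semiring_1 poly) \<le> m \<Longrightarrow> poly p x = (\<Sum>i\<le>m. coeff p i * x ^ i)"
  unfolding poly_altdef
  by (rule sum.mono_neutral_left) (auto simp: coeff_eq_0)

lemma integrable_circ:
  assumes "finite_measure M" "sets M = sets borel" "emeasure M (- sphere 0 1) = 0"
    "g \<in> borel_measurable borel" "\<And>z. cmod z = 1 \<Longrightarrow> norm (g z) \<le> B"
  shows "integrable M (g :: complex \<Rightarrow> complex)"
proof (rule Bochner_Integration.integrable_bound[where f="\<lambda>_. complex_of_real B"])
  show "integrable M (\<lambda>_. complex_of_real B)"
    using assms(1) finite_measure.integrable_const by blast
  show "g \<in> borel_measurable M" using assms(2,4) measurable_cong_sets by blast
  have "AE z in M. z \<in> sphere 0 1"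
    by (rule AE_I[where N="- sphere 0 1"]) (use assms(2,3) in auto)
  then show "AE z in M. norm (g z) \<le> norm (complex_of_real B)"
    by eventually_elim (use assms(5) in \<open>fastforce intro: order_trans[OF _ abs_ge_self]\<close>)
qed

lemma zhalf_shift:
  assumes "cmod z = 1"
  shows "zhalf t0 (2 * int k - int m) z = zhalf t0 (- int m) z * z ^ k"
proof -
  let ?t = "argt t0 z"
  have "z ^ k = cis ?t ^ k" using circ_cis[OF assms, of t0] by (rule arg_cong[where f="\<lambda>x. x ^ k"])
  also have "\<dots> = cis (real k * ?t)" by (rule Complex.DeMoivre)
  finally have "z ^ k = cis (real k * ?t)" .
  then have "zhalf t0 (- int m) z * z ^ k = cis (- real m * ?t / 2 + real k * ?t)"
    using assms by (simp add: zhalf_circ cis_mult)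
  also have "- real m * ?t / 2 + real k * ?t = real_of_int (2 * int k - int m) * ?t / 2"
    by (simp add: field_simps)
  finally show ?thesis using assms by (simp add: zhalf_circ)
qed

lemma hspan_poly:
  assumes "cmod z = 1" "degree p \<le> m"
  shows "hspan t0 m (coeff p) z = zhalf t0 (- int m) z * poly p z"
  unfolding hspan_def poly_sum_le[OF assms(2)] sum_distrib_left
  by (rule sum.cong) (simp_all add: zhalf_shift[OF assms(1)])

lemma hspan_add: "hspan t0 m (\<lambda>k. c k + e k) z = hspan t0 m c z + hspan t0 m e z"
  unfolding hspan_def by (simp add: distrib_right sum.distrib)

lemma zhalf_norm: "cmod z = 1 \<Longrightarrow> cmod (zhalf t0 k z) = 1"
  by (simp add: zhalf_circ)

lemma hspan_bound: "cmod z = 1 \<Longrightarrow> cmod (hspan t0 m c z) \<le> (\<Sum>k\<le>m. cmod (c k))"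
  unfolding hspan_def
  by (rule order_trans[OF norm_sum]) (simp add: norm_mult zhalf_norm)

lemma w_bound: "\<bar>4 * sin x * sin (y::real)\<bar> \<le> 4"
proof -
  have "\<bar>sin x\<bar> * \<bar>sin y\<bar> \<le> 1 * 1"
    by (rule mult_mono) (auto simp: abs_sin_le_one)
  then show ?thesis by (simp add: abs_mult)
qed

lemma integrand_bound:
  assumes "cmod z = 1"
  shows "cmod (complex_of_real (4 * sin x * sin y) * hspan t0 m c z * zhalf t0 k z)
         \<le> 4 * (\<Sum>k\<le>m. cmod (c k))"
proof -
  have "cmod (complex_of_real (4 * sin x * sin y) * hspan t0 m c z * zhalf t0 k z)
      = \<bar>4 * sin x * sin y\<bar> * cmod (hspan t0 m c z)"
    using assms by (simp add: norm_mult zhalf_norm abs_mult)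
  also have "\<dots> \<le> 4 * (\<Sum>k\<le>m. cmod (c k))"
    by (rule mult_mono[OF w_bound hspan_bound[OF assms]]) auto
  finally show ?thesis .
qed


lemma key_pt:
  assumes z: "cmod z = 1" and PR: "\<And>z. poly P z = (z - cis p1) * (z - cis p2) * poly R z"
    and dP: "degree P \<le> N + 1" and dR: "degree R \<le> N"
  shows "hspan t0 (N+1) (coeff P) z * zhalf t0 (int m - 1 - 2 * int k) z
    = - cis ((p1+p2)/2) * (complex_of_real (4 * sin ((argt t0 z - p1)/2) * sin ((argt t0 z - p2)/2))
         * hspan t0 N (coeff R) z * zhalf t0 (int m - 2 * int k) z)"
proof -
  define t where "t = argt t0 z"
  define C where "C = cis ((p1+p2)/2)"
  define w where "w = complex_of_real (4 * sin ((t - p1)/2) * sin ((t - p2)/2))"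
  have zc: "z = cis t" unfolding t_def by (rule circ_cis[OF z])
  have pP: "poly P z = - (cis t * C * w) * poly R z"
    unfolding PR C_def w_def using cis_prod[of t p1 p2] zc by simp
  have E: "cis ((- 1 - real N) * t / 2) * cis t * cis ((real m - 1 - 2 * real k) * t / 2)
         = cis (- real N * t / 2) * cis ((real m - 2 * real k) * t / 2)"
  proof -
    have "(- 1 - real N) * t / 2 + t + (real m - 1 - 2 * real k) * t / 2
          = - real N * t / 2 + (real m - 2 * real k) * t / 2" by (simp add: field_simps)
    then show ?thesis by (simp add: cis_mult)
  qed
  have "hspan t0 (N+1) (coeff P) z * zhalf t0 (int m - 1 - 2 * int k) z
      = cis ((- 1 - real N) * t / 2) * (- (cis t * C * w) * poly R z) * cis ((real m - 1 - 2 * real k) * t / 2)"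
    unfolding hspan_poly[OF z dP] by (simp add: pP zhalf_circ[OF z] t_def)
  also have "\<dots> = - (C * w * poly R z) * (cis ((- 1 - real N) * t / 2) * cis t * cis ((real m - 1 - 2 * real k) * t / 2))"
    by (simp add: mult_ac)
  also have "\<dots> = - (C * w * poly R z) * (cis (- real N * t / 2) * cis ((real m - 2 * real k) * t / 2))"
    by (simp only: E)
  also have "\<dots> = - C * (w * (cis (- real N * t / 2) * poly R z) * cis ((real m - 2 * real k) * t / 2))"
    by (simp add: mult_ac)
  also have "\<dots> = - C * (w * hspan t0 N (coeff R) z * zhalf t0 (int m - 2 * int k) z)"
    by (simp add: hspan_poly[OF z dR] zhalf_circ[OF z] t_def)
  finally show ?thesis unfolding C_def w_def t_def .
qed

theorem theorem4p3:
  fixes t0 :: real and r :: nat and \<mu> :: "nat \<Rightarrow> complex measure" and n :: "nat \<Rightarrow> nat"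
    and \<tau> :: complex and X :: "complex \<Rightarrow> complex" and \<phi>1 \<phi>2 :: real
  assumes "\<forall>j<r. sets (\<mu> j) = sets borel"
    and "\<forall>j<r. finite_measure (\<mu> j)"
    and "\<forall>j<r. emeasure (\<mu> j) (- sphere 0 1) = 0"
    and "\<forall>j<r. infinite (msupp (\<mu> j))"
    and "phi_normal t0 r \<mu> n"
    and "cmod \<tau> = 1"
    and "para_orth t0 r \<mu> n \<tau> X"
    and "\<exists>z. z \<noteq> 0 \<and> X z \<noteq> 0"
    and "cis \<phi>1 \<noteq> cis \<phi>2"
    and "zhalf t0 (int (\<Sum>j<r. n j) + 1) (cis \<phi>1) * X (cis \<phi>1) = 0"
    and "zhalf t0 (int (\<Sum>j<r. n j) + 1) (cis \<phi>2) * X (cis \<phi>2) = 0"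
  shows "\<not> phi_normal_w t0 r \<mu>
           (\<lambda>j z. 4 * sin ((argt t0 z - \<phi>1) / 2) * sin ((argt t0 z - \<phi>2) / 2)) n"
proof
  define N where "N = (\<Sum>j<r. n j)"
  define a where "a = cis \<phi>1"
  define b where "b = cis \<phi>2"
  define C where "C = cis ((\<phi>1+\<phi>2)/2)"
  assume H: "phi_normal_w t0 r \<mu>
           (\<lambda>j z. 4 * sin ((argt t0 z - \<phi>1) / 2) * sin ((argt t0 z - \<phi>2) / 2)) n"
  obtain d where Xd: "X = hspan t0 (N + 1) d"
    using assms(7) unfolding para_orth_def Let_def N_def by blast
  have orth: "\<And>j k. j < r \<Longrightarrow> k < n j \<Longrightarrow>
      (LINT z|\<mu> j. X z * zhalf t0 (int (n j) - 1 - 2 * int k) z) = 0"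
    using assms(7) unfolding para_orth_def Let_def by blast
  have ab: "a \<noteq> b" using assms(9) unfolding a_def b_def .
  have na: "cmod a = 1" and nb: "cmod b = 1" unfolding a_def b_def by simp_all
  have Xa: "X a = 0"
    using assms(10) zhalf_circ[OF na] unfolding a_def N_def by simp
  have Xb: "X b = 0"
    using assms(11) zhalf_circ[OF nb] unfolding b_def N_def by simp
  define P where "P = (\<Sum>k\<le>N+1. monom (d k) k)"
  have coeffP: "coeff P i = (if i \<le> N+1 then d i else 0)" for i
    unfolding P_def by (simp add: coeff_sum coeff_monom)
  have dP: "degree P \<le> N + 1" by (rule degree_le) (simp add: coeffP)
  have XP: "X z = hspan t0 (N + 1) (coeff P) z" for z
    unfolding Xd hspan_def by (rule sum.cong) (simp_all add: coeffP)
  have polyP: "cmod z = 1 \<Longrightarrow> X z = zhalf t0 (- int (N+1)) z * poly P z" for z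
    unfolding XP by (rule hspan_poly[OF _ dP])
  have "poly P a = 0" using polyP[OF na] Xa zhalf_circ[OF na] by simp
  then obtain Q where PQ: "P = [:-a,1:] * Q" using poly_eq_0_iff_dvd by blast
  have "poly P b = 0" using polyP[OF nb] Xb zhalf_circ[OF nb] by simp
  then have "poly Q b = 0" using ab unfolding PQ by simp
  then obtain R where QR: "Q = [:-b,1:] * R" using poly_eq_0_iff_dvd by blast
  have PR: "\<And>z. poly P z = (z - cis \<phi>1) * (z - cis \<phi>2) * poly R z"
    unfolding PQ QR a_def b_def by (simp add: algebra_simps)
  have P0: "P \<noteq> 0"
  proof
    assume "P = 0"
    then have "\<And>z. X z = 0" unfolding XP hspan_def by simp
    then show False using assms(8) by blast
  qed
  then have R0: "R \<noteq> 0" unfolding PQ QR by auto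
  have e1: "degree ([:-b,1:] * R) = degree [:-b,1:] + degree R"
    by (rule degree_mult_eq) (use R0 in auto)
  have nz: "[:-b,1:] * R \<noteq> 0" using R0 by (metis mult_eq_0_iff pCons_eq_0_iff one_neq_zero)
  have e2: "degree ([:-a,1:] * ([:-b,1:] * R)) = degree [:-a,1:] + degree ([:-b,1:] * R)"
    by (rule degree_mult_eq[OF _ nz]) simp
  have e3: "degree [:-a,1:] = 1" "degree [:-b,1:] = 1" by simp_all
  have "degree P = degree R + 2"
    unfolding PQ QR using e1 e2 e3 by linarith
  then have dRl: "degree R < N" using dP by simp
  then have dR: "degree R \<le> N" by simp
  have cR: "\<And>k. k \<ge> N \<Longrightarrow> coeff R k = 0" using dRl by (simp add: coeff_eq_0)
  define w where "w = (\<lambda>z. 4 * sin ((argt t0 z - \<phi>1) / 2) * sin ((argt t0 z - \<phi>2) / 2))"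
  define Prop where "Prop = (\<lambda>c::nat \<Rightarrow> complex. (\<forall>k>N. c k = 0) \<and> c N = 1 \<and>
        (\<forall>j<r. \<forall>k<n j.
           (LINT z|\<mu> j. complex_of_real (w z) * hspan t0 N c z
                          * zhalf t0 (int (n j) - 2 * int k) z) = 0))"
  have "\<exists>!c. Prop c" using H unfolding phi_normal_w_def Let_def Prop_def w_def N_def by simp
  then obtain c where Pc: "Prop c" and uq: "\<And>c'. Prop c' \<Longrightarrow> c' = c" by blast
  have AEs: "\<And>j. j < r \<Longrightarrow> AE z in \<mu> j. cmod z = 1"
  proof -
    fix j assume j: "j < r"
    have "AE z in \<mu> j. z \<in> sphere 0 1"
      by (rule AE_I[where N="- sphere 0 1"]) (use assms(1,3) j in auto)
    then show "AE z in \<mu> j. cmod z = 1" by simp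
  qed
  have meas: "\<And>j e k. j < r \<Longrightarrow> (\<lambda>z. complex_of_real (w z) * hspan t0 N e z
                          * zhalf t0 k z) \<in> borel_measurable (\<mu> j)"
  proof -
    fix j e k assume j: "j < r"
    have "(\<lambda>z. complex_of_real (w z) * hspan t0 N e z * zhalf t0 k z) \<in> borel_measurable borel"
      unfolding w_def by measurable
    then show "(\<lambda>z. complex_of_real (w z) * hspan t0 N e z * zhalf t0 k z) \<in> borel_measurable (\<mu> j)"
      using assms(1) j measurable_cong_sets by blast
  qed
  have integ: "\<And>j e k. j < r \<Longrightarrow> integrable (\<mu> j) (\<lambda>z. complex_of_real (w z) * hspan t0 N e z
                          * zhalf t0 k z)"
  proof -
    fix j e k assume j: "j < r"
    show "integrable (\<mu> j) (\<lambda>z. complex_of_real (w z) * hspan t0 N e z * zhalf t0 k z)"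
    proof (rule integrable_circ[where B="4 * (\<Sum>k\<le>N. cmod (e k))"])
      show "finite_measure (\<mu> j)" "sets (\<mu> j) = sets borel" "emeasure (\<mu> j) (- sphere 0 1) = 0"
        using assms(1,2,3) j by auto
      show "(\<lambda>z. complex_of_real (w z) * hspan t0 N e z * zhalf t0 k z) \<in> borel_measurable borel"
        unfolding w_def by measurable
      show "cmod (complex_of_real (w z) * hspan t0 N e z * zhalf t0 k z) \<le> 4 * (\<Sum>k\<le>N. cmod (e k))"
        if "cmod z = 1" for z
        unfolding w_def by (rule integrand_bound[OF that])
    qed
  qed
  have intR: "(LINT z|\<mu> j. complex_of_real (w z) * hspan t0 N (coeff R) z
                          * zhalf t0 (int (n j) - 2 * int k) z) = 0" if j: "j < r" and k: "k < n j" for j k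
  proof -
    have C0: "C \<noteq> 0" unfolding C_def by simp
    have "(LINT z|\<mu> j. complex_of_real (w z) * hspan t0 N (coeff R) z
                          * zhalf t0 (int (n j) - 2 * int k) z)
        = (LINT z|\<mu> j. (X z * zhalf t0 (int (n j) - 1 - 2 * int k) z) * (- 1 / C))"
    proof (rule integral_cong_AE)
      show "(\<lambda>z. complex_of_real (w z) * hspan t0 N (coeff R) z
                          * zhalf t0 (int (n j) - 2 * int k) z) \<in> borel_measurable (\<mu> j)"
        by (rule meas[OF j])
      have "(\<lambda>z. (X z * zhalf t0 (int (n j) - 1 - 2 * int k) z) * (- 1 / C)) \<in> borel_measurable borel"
        unfolding Xd by measurable
      then show "(\<lambda>z. (X z * zhalf t0 (int (n j) - 1 - 2 * int k) z) * (- 1 / C)) \<in> borel_measurable (\<mu> j)"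
        using assms(1) j measurable_cong_sets by blast
      show "AE z in \<mu> j. complex_of_real (w z) * hspan t0 N (coeff R) z * zhalf t0 (int (n j) - 2 * int k) z
              = (X z * zhalf t0 (int (n j) - 1 - 2 * int k) z) * (- 1 / C)"
        using AEs[OF j]
      proof eventually_elim
        case (elim z)
        show ?case
          unfolding XP key_pt[OF elim PR dP dR, of t0 "n j" k] w_def C_def[symmetric]
          using C0 by (simp add: field_simps)
      qed
    qed
    also have "\<dots> = 0" using orth[OF j k] by simp
    finally show ?thesis .
  qed
  have "Prop (\<lambda>k. c k + coeff R k)"
    unfolding Prop_def
  proof (intro conjI allI impI)
    show "\<And>k. N < k \<Longrightarrow> c k + coeff R k = 0" using Pc cR unfolding Prop_def by simp
    show "c N + coeff R N = 1" using Pc cR unfolding Prop_def by simp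
    fix j k assume j: "j < r" and k: "k < n j"
    have "(LINT z|\<mu> j. complex_of_real (w z) * hspan t0 N (\<lambda>k. c k + coeff R k) z
                          * zhalf t0 (int (n j) - 2 * int k) z)
       = (LINT z|\<mu> j. complex_of_real (w z) * hspan t0 N c z * zhalf t0 (int (n j) - 2 * int k) z
             + complex_of_real (w z) * hspan t0 N (coeff R) z * zhalf t0 (int (n j) - 2 * int k) z)"
      by (simp add: hspan_add algebra_simps)
    also have "\<dots> = (LINT z|\<mu> j. complex_of_real (w z) * hspan t0 N c z * zhalf t0 (int (n j) - 2 * int k) z)
        + (LINT z|\<mu> j. complex_of_real (w z) * hspan t0 N (coeff R) z * zhalf t0 (int (n j) - 2 * int k) z)"
      by (rule Bochner_Integration.integral_add[OF integ[OF j] integ[OF j]])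
    also have "\<dots> = 0" using Pc j k intR[OF j k] unfolding Prop_def by simp
    finally show "(LINT z|\<mu> j. complex_of_real (w z) * hspan t0 N (\<lambda>k. c k + coeff R k) z
                          * zhalf t0 (int (n j) - 2 * int k) z) = 0" .
  qed
  then have "(\<lambda>k. c k + coeff R k) = c" by (rule uq)
  then have "\<And>k. coeff R k = 0" by (metis add_cancel_left_right)
  then have "R = 0" by (simp add: poly_eq_iff)
  then show False using R0 by simp
qed

end
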